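(* Let $n\ge 2$ and let $$A=\begin{bmatrix}0&a_{12}&\mathbf 0^T\\ a_{21}&0&\mathbf y^T\\ \mathbf x&\mathbf 0&R\end{bmatrix}$$ be a real $n\times n$ matrix, where $a_{12},a_{21}\in\mathbb R$ with $a_{12}\neq0$, $\mathbf x,\mathbf y\in\mathbb R^{n-2}$ and $R$ is a real $(n-2)\times(n-2)$ matrix. If $\lambda$ is a simple eigenvalue of $A$ such that $A\mathbf u=\lambda\mathbf u$ and $\mathbf v^TA=\lambda\mathbf v^T$ for some entrywise positive $\mathbf u,\mathbf v\in\mathbb R^n$, then $\lambda$ is a simple eigenvalue of the $(n-1)\times(n-1)$ matrix $$B=\begin{bmatrix}\lambda+a_{21}-\frac{\lambda^2}{a_{12}}&\mathbf y^T\\ \mathbf x&R\end{bmatrix}.$$ Moreover, $B\mathbf w=\lambda\mathbf w$ and $\mathbf z^TB=\lambda\mathbf z^T$, where $w_1=u_1$, $z_1=v_2$, and $w_i=u_{i+1}$, $z_i=v_{i+1}$ for $i\ge 2$.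
   Context: A simple eigenvalue is one of algebraic multiplicity one; $\mathbf 0$ denotes a zero column vector of appropriate size. *)

theory Defs
  imports "Jordan_Normal_Form.Char_Poly"
begin

definition simple_eigenvalue :: "real mat \<Rightarrow> real \<Rightarrow> bool" where
  "simple_eigenvalue M lam \<longleftrightarrow> order lam (char_poly M) = 1"

text \<open>The n x n block matrix [[0, a12, 0^T], [a21, 0, y^T], [x, 0, R]]
  (indices start at 0).\<close>
definition blockA :: "nat \<Rightarrow> real \<Rightarrow> real \<Rightarrow> real vec \<Rightarrow> real vec \<Rightarrow> real mat \<Rightarrow> real mat" where
  "blockA n a12 a21 x y R = mat n n (\<lambda>(i,j).
     if i = 0 then (if j = 1 then a12 else 0)
     else if i = 1 then (if j = 0 then a21 else if j = 1 then 0 else y $ (j - 2))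
     else (if j = 0 then x $ (i - 2) else if j = 1 then 0 else R $$ (i - 2, j - 2)))"

definition blockB :: "nat \<Rightarrow> real \<Rightarrow> real \<Rightarrow> real \<Rightarrow> real vec \<Rightarrow> real vec \<Rightarrow> real mat \<Rightarrow> real mat" where
  "blockB n lam a12 a21 x y R = mat (n - 1) (n - 1) (\<lambda>(i,j).
     if i = 0 then (if j = 0 then lam + a21 - lam^2 / a12 else y $ (j - 1))
     else (if j = 0 then x $ (i - 1) else R $$ (i - 1, j - 1)))"

end

theory Submission
  imports Defs
begin


definition Pm :: "nat \<Rightarrow> real vec \<Rightarrow> real mat" where
  "Pm n w = mat n n (\<lambda>(i,j). (if j = 0 then w $ i else 0) + (if j = i \<and> i \<noteq> 0 then 1 else 0))"
definition Qm :: "nat \<Rightarrow> real vec \<Rightarrow> real mat" where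
  "Qm n w = mat n n (\<lambda>(i,j). (if j = 0 then (if i = 0 then 1 / w $ 0 else - w $ i / w $ 0) else 0)
      + (if j = i \<and> i \<noteq> 0 then 1 else 0))"

lemma Pm_dims[simp]: "dim_row (Pm n w) = n" "dim_col (Pm n w) = n" "Pm n w \<in> carrier_mat n n"
  by (auto simp: Pm_def)
lemma Qm_dims[simp]: "dim_row (Qm n w) = n" "dim_col (Qm n w) = n" "Qm n w \<in> carrier_mat n n"
  by (auto simp: Qm_def)
lemma Pm_idx: "i < n \<Longrightarrow> j < n \<Longrightarrow> Pm n w $$ (i,j) = (if j = 0 then w $ i else 0) + (if j = i \<and> i \<noteq> 0 then 1 else 0)"
  by (simp add: Pm_def)

lemma Qm_idx: "i < n \<Longrightarrow> j < n \<Longrightarrow> Qm n w $$ (i,j) = (if j = 0 then (if i = 0 then 1 / w $ 0 else - w $ i / w $ 0) else 0)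
      + (if j = i \<and> i \<noteq> 0 then 1 else 0)"
  by (simp add: Qm_def)

lemma PQ: assumes "w $ 0 \<noteq> 0" shows "Pm n w * Qm n w = 1\<^sub>m n"
proof (rule eq_matI)
  fix i j assume ij: "i < dim_row (1\<^sub>m n)" "j < dim_col (1\<^sub>m n)"
  hence i: "i < n" and j: "j < n" by auto
  have "(Pm n w * Qm n w) $$ (i,j) = (\<Sum>k\<in>{0..<n}. ((if k = 0 then w $ i else 0) + (if k = i \<and> i \<noteq> 0 then 1 else 0)) * Qm n w $$ (k,j))"
    using i j by (simp add: Pm_idx scalar_prod_def row_def col_def)
  also have "\<dots> = (\<Sum>k\<in>{0..<n}. (if k = 0 then w $ i * Qm n w $$ (k,j) else 0)) + (\<Sum>k\<in>{0..<n}. (if k = i then (if i \<noteq> 0 then Qm n w $$ (k,j) else 0) else 0))"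
    unfolding sum.distrib[symmetric] by (rule sum.cong) auto
  also have "\<dots> = 1\<^sub>m n $$ (i,j)" using i j assms
    by (auto simp: Qm_idx field_simps)
  finally show "(Pm n w * Qm n w) $$ (i,j) = 1\<^sub>m n $$ (i,j)" .
qed (auto simp: Pm_def Qm_def)

lemma QP: assumes "w $ 0 \<noteq> 0" shows "Qm n w * Pm n w = 1\<^sub>m n"
proof (rule eq_matI)
  fix i j assume ij: "i < dim_row (1\<^sub>m n)" "j < dim_col (1\<^sub>m n)"
  hence i: "i < n" and j: "j < n" by auto
  have "(Qm n w * Pm n w) $$ (i,j) = (\<Sum>k\<in>{0..<n}. Qm n w $$ (i,k) * ((if j = 0 then w $ k else 0) + (if j = k \<and> k \<noteq> 0 then 1 else 0)))"
    using i j by (simp add: Pm_idx scalar_prod_def row_def col_def)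
  also have "\<dots> = (\<Sum>k\<in>{0..<n}. Qm n w $$ (i,k) * (if j = 0 then w $ k else 0)) + (\<Sum>k\<in>{0..<n}. (if k = j then (if j \<noteq> 0 then Qm n w $$ (i,k) else 0) else 0))"
    unfolding sum.distrib[symmetric] by (rule sum.cong) auto
  also have "\<dots> = 1\<^sub>m n $$ (i,j)" 
  proof (cases "j = 0")
    case True
    have "(\<Sum>k\<in>{0..<n}. Qm n w $$ (i,k) * w $ k) = (\<Sum>k\<in>{0..<n}. (if k = 0 then (if i = 0 then 1 / w $ 0 else - w $ i / w $ 0) * w $ 0 else 0) + (if k = i \<and> i \<noteq> 0 then w $ k else 0))"
      using i by (intro sum.cong refl, auto simp: Qm_idx distrib_right)
    also have "\<dots> = (if i = 0 then 1 else 0)" using i assms j by (simp add: sum.distrib Qm_idx)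
    finally show ?thesis using True i j by simp
  next
    case False
    then show ?thesis using i j by (auto simp: Qm_idx)
  qed
  finally show "(Qm n w * Pm n w) $$ (i,j) = 1\<^sub>m n $$ (i,j)" .
qed (auto simp: Pm_def Qm_def)

lemma Pe: assumes "w \<in> carrier_vec n" "0 < n" shows "Pm n w *\<^sub>v unit_vec n 0 = w"
  by (rule eq_vecI, insert assms, auto simp: Pm_idx)

lemma Qw: assumes "w \<in> carrier_vec n" "0 < n" "w $ 0 \<noteq> 0" shows "Qm n w *\<^sub>v w = unit_vec n 0"
proof -
  have "Qm n w *\<^sub>v w = Qm n w *\<^sub>v (Pm n w *\<^sub>v unit_vec n 0)" using Pe[OF assms(1,2)] by simp
  also have "\<dots> = (Qm n w * Pm n w) *\<^sub>v unit_vec n 0"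
    by (rule assoc_mult_mat_vec[symmetric], auto)
  also have "\<dots> = unit_vec n 0" using QP[OF assms(3)] by simp
  finally show ?thesis .
qed

lemma deflate:
  fixes M :: "real mat"
  assumes M: "M \<in> carrier_mat (Suc m) (Suc m)" and w: "w \<in> carrier_vec (Suc m)" and w0: "w $ 0 \<noteq> 0"
    and ev: "M *\<^sub>v w = lam \<cdot>\<^sub>v w"
  shows "order lam (char_poly M) = 1 \<longleftrightarrow>
    (\<forall>x \<in> carrier_vec (Suc m). \<forall>d. M *\<^sub>v x - lam \<cdot>\<^sub>v x = d \<cdot>\<^sub>v w \<longrightarrow> (\<exists>c. x = c \<cdot>\<^sub>v w))"
proof -
  define n where "n = Suc m"
  have n0: "0 < n" unfolding n_def by simp
  note M = M[folded n_def] and w = w[folded n_def]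
  define P where "P = Pm n w"
  define Q where "Q = Qm n w"
  define C where "C = Q * M * P"
  have P: "P \<in> carrier_mat n n" and Q: "Q \<in> carrier_mat n n" unfolding P_def Q_def by auto
  have C: "C \<in> carrier_mat n n" unfolding C_def using P Q M by auto
  have PQ: "P * Q = 1\<^sub>m n" and QP: "Q * P = 1\<^sub>m n" unfolding P_def Q_def using PQ QP w0 by auto
  have Pe: "P *\<^sub>v unit_vec n 0 = w" unfolding P_def using Pe w n0 by auto
  have Qw: "Q *\<^sub>v w = unit_vec n 0" unfolding Q_def using Qw w n0 w0 by auto
  have Ce: "C *\<^sub>v unit_vec n 0 = lam \<cdot>\<^sub>v unit_vec n 0"
  proof -
    have "C *\<^sub>v unit_vec n 0 = Q *\<^sub>v (M *\<^sub>v (P *\<^sub>v unit_vec n 0))"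
    proof -
      have MP: "M * P \<in> carrier_mat n n" using M P by simp
      have "C = Q * (M * P)" unfolding C_def using Q M P by simp
      then show ?thesis using assoc_mult_mat_vec[OF Q MP, of "unit_vec n 0"] assoc_mult_mat_vec[OF M P, of "unit_vec n 0"]
        by simp
    qed
    also have "\<dots> = Q *\<^sub>v (lam \<cdot>\<^sub>v w)" using Pe ev by simp
    also have "\<dots> = lam \<cdot>\<^sub>v unit_vec n 0" using Qw mult_mat_vec[OF Q w] by simp
    finally show ?thesis .
  qed
  have C0: "C $$ (i,0) = (if i = 0 then lam else 0)" if i: "i < n" for i
  proof -
    have "C $$ (i,0) = (C *\<^sub>v unit_vec n 0) $ i" using C i n0 by simp
    then show ?thesis using Ce i by simp
  qed
  define M' where "M' = mat m m (\<lambda>(i,j). C $$ (Suc i, Suc j))"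
  define r where "r = mat 1 m (\<lambda>(i,j). C $$ (0, Suc j))"
  define L where "L = mat 1 1 (\<lambda>_. lam)"
  have M': "M' \<in> carrier_mat m m" unfolding M'_def by simp
  have Cblock: "C = four_block_mat L r (0\<^sub>m m 1) M'"
  proof (rule eq_matI)
    fix i j assume "i < dim_row (four_block_mat L r (0\<^sub>m m 1) M')" "j < dim_col (four_block_mat L r (0\<^sub>m m 1) M')"
    hence i: "i < n" and j: "j < n" unfolding n_def L_def r_def M'_def by auto
    show "C $$ (i,j) = four_block_mat L r (0\<^sub>m m 1) M' $$ (i,j)"
      using i j C0[OF i] unfolding n_def L_def r_def M'_def
      by (cases i; cases j; auto)
  qed (insert C, auto simp: n_def L_def r_def M'_def)
  have sim: "similar_mat M C"
  proof -
    have "P * C * Q = P * (Q * M * P) * Q" unfolding C_def ..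
    also have "\<dots> = (P * Q) * M * (P * Q)" using P Q M
      by (simp add: assoc_mult_mat[of _ n n _ n _ n])
    also have "\<dots> = M" using PQ M by simp
    finally have "M = P * C * Q" by simp
    then show ?thesis unfolding similar_mat_def similar_mat_wit_def Let_def
      using P Q C M PQ QP by (intro exI[of _ P] exI[of _ Q]) auto
  qed
  have cpL: "char_poly L = [:-lam, 1:]"
    unfolding L_def char_poly_defs by (simp add: det_single)
  have cp: "char_poly M = [:-lam, 1:] * char_poly M'"
    using char_poly_similar[OF sim] Cblock char_poly_four_block_zeros_col[of L r m M'] cpL M'
    unfolding L_def r_def by auto
  have ordeq: "order lam (char_poly M) = 1 + order lam (char_poly M')"
  proof -
    have nz: "char_poly M' \<noteq> 0" using degree_monic_char_poly[OF M'] by auto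
    have "order lam (char_poly M) = order lam [:-lam, 1:] + order lam (char_poly M')"
    proof -
      have "[:-lam, 1:] * char_poly M' \<noteq> 0" using nz by (metis mult_eq_0_iff pCons_eq_0_iff one_neq_zero)
      then show ?thesis unfolding cp by (rule order_mult)
    qed
    moreover have "order lam [:-lam, 1:] = 1" using order_linear_power[of lam 1] by simp
    ultimately show ?thesis by simp
  qed
  have ord1: "order lam (char_poly M) = 1 \<longleftrightarrow> \<not> eigenvalue M' lam"
  proof -
    have nz: "char_poly M' \<noteq> 0" using degree_monic_char_poly[OF M'] by auto
    show ?thesis unfolding ordeq eigenvalue_root_char_poly[OF M'] using order_root[of "char_poly M'" lam] nz
      by auto
  qed
  have PQx: "P *\<^sub>v (Q *\<^sub>v x) = x" if x: "x \<in> carrier_vec n" for x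
    using assoc_mult_mat_vec[OF P Q x, symmetric] PQ x by simp
  have QPx: "Q *\<^sub>v (P *\<^sub>v x) = x" if x: "x \<in> carrier_vec n" for x
    using assoc_mult_mat_vec[OF Q P x, symmetric] QP x by simp
  have Cy: "C *\<^sub>v y = Q *\<^sub>v (M *\<^sub>v (P *\<^sub>v y))" if y: "y \<in> carrier_vec n" for y
  proof -
    have MP: "M * P \<in> carrier_mat n n" using M P by simp
    have "C = Q * (M * P)" unfolding C_def using Q M P by simp
    then show ?thesis using assoc_mult_mat_vec[OF Q MP y] assoc_mult_mat_vec[OF M P y]
      by simp
  qed
  have Crow: "(C *\<^sub>v y) $ Suc i = (M' *\<^sub>v vec m (\<lambda>j. y $ Suc j)) $ i"
    if y: "y \<in> carrier_vec n" and i: "i < m" for y i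
  proof -
    have "(C *\<^sub>v y) $ Suc i = (\<Sum>j\<in>{0..<Suc m}. C $$ (Suc i, j) * y $ j)"
      using C y i unfolding n_def by (simp add: scalar_prod_def row_def)
    also have "\<dots> = C $$ (Suc i, 0) * y $ 0 + (\<Sum>j\<in>{0..<m}. C $$ (Suc i, Suc j) * y $ Suc j)"
      by (simp add: sum.atLeast0_lessThan_Suc_shift del: sum.op_ivl_Suc)
    also have "C $$ (Suc i, 0) = 0" using C0[of "Suc i"] i unfolding n_def by simp
    also have "(\<Sum>j\<in>{0..<m}. C $$ (Suc i, Suc j) * y $ Suc j) = (M' *\<^sub>v vec m (\<lambda>j. y $ Suc j)) $ i"
      using i unfolding M'_def by (simp add: scalar_prod_def row_def)
    finally show ?thesis by simp
  qed
  have e0: "unit_vec n 0 \<in> carrier_vec n" by simp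
  show ?thesis unfolding ord1 n_def[symmetric]
  proof
    assume ne: "\<not> eigenvalue M' lam"
    show "\<forall>x \<in> carrier_vec n. \<forall>d. M *\<^sub>v x - lam \<cdot>\<^sub>v x = d \<cdot>\<^sub>v w \<longrightarrow> (\<exists>c. x = c \<cdot>\<^sub>v w)"
    proof (intro ballI allI impI)
      fix x d assume x: "x \<in> carrier_vec n" and eq: "M *\<^sub>v x - lam \<cdot>\<^sub>v x = d \<cdot>\<^sub>v w"
      define y where "y = Q *\<^sub>v x"
      have y: "y \<in> carrier_vec n" unfolding y_def using Q x by simp
      have Mx: "M *\<^sub>v x = lam \<cdot>\<^sub>v x + d \<cdot>\<^sub>v w"
      proof (rule eq_vecI)
        fix i assume "i < dim_vec (lam \<cdot>\<^sub>v x + d \<cdot>\<^sub>v w)"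
        hence i: "i < n" using w by simp
        have "(M *\<^sub>v x - lam \<cdot>\<^sub>v x) $ i = (d \<cdot>\<^sub>v w) $ i" using eq by simp
        then show "(M *\<^sub>v x) $ i = (lam \<cdot>\<^sub>v x + d \<cdot>\<^sub>v w) $ i" using i x w M by simp
      qed (insert M x w, simp)
      have Cy': "C *\<^sub>v y = lam \<cdot>\<^sub>v y + d \<cdot>\<^sub>v unit_vec n 0"
      proof -
        have "C *\<^sub>v y = Q *\<^sub>v (M *\<^sub>v x)" using Cy[OF y] PQx[OF x] unfolding y_def by simp
        also have "\<dots> = Q *\<^sub>v (lam \<cdot>\<^sub>v x) + Q *\<^sub>v (d \<cdot>\<^sub>v w)" unfolding Mx
          using mult_add_distrib_mat_vec[OF Q] x w by simp
        also have "\<dots> = lam \<cdot>\<^sub>v y + d \<cdot>\<^sub>v unit_vec n 0" unfolding y_def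
          using mult_mat_vec[OF Q x] mult_mat_vec[OF Q w] Qw by simp
        finally show ?thesis .
      qed
      define y' where "y' = vec m (\<lambda>j. y $ Suc j)"
      have My': "M' *\<^sub>v y' = lam \<cdot>\<^sub>v y'"
      proof (rule eq_vecI)
        fix i assume "i < dim_vec (lam \<cdot>\<^sub>v y')"
        hence i: "i < m" unfolding y'_def by simp
        have "(M' *\<^sub>v y') $ i = (C *\<^sub>v y) $ Suc i" using Crow[OF y i] unfolding y'_def by simp
        also have "\<dots> = lam * y $ Suc i" unfolding Cy' using y i unfolding n_def by simp
        finally show "(M' *\<^sub>v y') $ i = (lam \<cdot>\<^sub>v y') $ i" using i unfolding y'_def by simp
      qed (insert M', auto simp: y'_def)
      have y'c: "y' \<in> carrier_vec m" unfolding y'_def by simp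
      have y'0: "y' = 0\<^sub>v m" using ne M' y'c My' unfolding eigenvalue_def eigenvector_def by auto
      have yy: "y = (y $ 0) \<cdot>\<^sub>v unit_vec n 0"
      proof (rule eq_vecI)
        fix i assume "i < dim_vec ((y $ 0) \<cdot>\<^sub>v unit_vec n 0)"
        hence i: "i < n" by simp
        show "y $ i = ((y $ 0) \<cdot>\<^sub>v unit_vec n 0) $ i"
        proof (cases i)
          case (Suc j)
          then have "y' $ j = 0" using y'0 i unfolding n_def by simp
          then show ?thesis using Suc i unfolding y'_def n_def by simp
        qed (insert i, simp)
      qed (insert y, simp)
      have "x = P *\<^sub>v y" unfolding y_def using PQx[OF x] by simp
      also have "\<dots> = (y $ 0) \<cdot>\<^sub>v w" by (subst yy, subst mult_mat_vec[OF P e0], simp add: Pe)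
      finally show "\<exists>c. x = c \<cdot>\<^sub>v w" by blast
    qed
  next
    assume R: "\<forall>x \<in> carrier_vec n. \<forall>d. M *\<^sub>v x - lam \<cdot>\<^sub>v x = d \<cdot>\<^sub>v w \<longrightarrow> (\<exists>c. x = c \<cdot>\<^sub>v w)"
    show "\<not> eigenvalue M' lam"
    proof
      assume "eigenvalue M' lam"
      then obtain x' where x': "x' \<in> carrier_vec m" "x' \<noteq> 0\<^sub>v m" and ev': "M' *\<^sub>v x' = lam \<cdot>\<^sub>v x'"
        unfolding eigenvalue_def eigenvector_def using M' by auto
      define y where "y = vec n (\<lambda>i. if i = 0 then 0 else x' $ (i - 1))"
      have y: "y \<in> carrier_vec n" unfolding y_def by simp
      define d where "d = (C *\<^sub>v y) $ 0"
      have Cy': "C *\<^sub>v y - lam \<cdot>\<^sub>v y = d \<cdot>\<^sub>v unit_vec n 0"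
      proof (rule eq_vecI)
        fix i assume "i < dim_vec (d \<cdot>\<^sub>v unit_vec n 0)"
        hence i: "i < n" by simp
        show "(C *\<^sub>v y - lam \<cdot>\<^sub>v y) $ i = (d \<cdot>\<^sub>v unit_vec n 0) $ i"
        proof (cases i)
          case 0
          then show ?thesis using i C y unfolding d_def y_def by simp
        next
          case (Suc j)
          have j: "j < m" using i Suc unfolding n_def by simp
          have yv: "vec m (\<lambda>j. y $ Suc j) = x'" using x'(1) unfolding y_def n_def by auto
          have "(C *\<^sub>v y) $ Suc j = lam * x' $ j" using Crow[OF y j] ev' x' j unfolding yv by simp
          then show ?thesis using Suc i C y j unfolding y_def n_def by simp
        qed
      qed (insert C y, auto)
      define x where "x = P *\<^sub>v y"
      have x: "x \<in> carrier_vec n" unfolding x_def using P y by simp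
      have "M *\<^sub>v x - lam \<cdot>\<^sub>v x = P *\<^sub>v (C *\<^sub>v y - lam \<cdot>\<^sub>v y)"
      proof -
        have Mx: "M *\<^sub>v x \<in> carrier_vec n" using M x by simp
        have "P *\<^sub>v (C *\<^sub>v y - lam \<cdot>\<^sub>v y) = P *\<^sub>v (C *\<^sub>v y) - P *\<^sub>v (lam \<cdot>\<^sub>v y)"
          using mult_minus_distrib_mat_vec[OF P] C y by simp
        also have "P *\<^sub>v (C *\<^sub>v y) = M *\<^sub>v x" using Cy[OF y] PQx[OF Mx] unfolding x_def by simp
        also have "P *\<^sub>v (lam \<cdot>\<^sub>v y) = lam \<cdot>\<^sub>v x" unfolding x_def using mult_mat_vec[OF P y] by simp
        finally show ?thesis by simp
      qed
      also have "\<dots> = d \<cdot>\<^sub>v w" unfolding Cy' using mult_mat_vec[OF P e0] Pe by simp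
      finally obtain c where "x = c \<cdot>\<^sub>v w" using R x by blast
      hence "y = c \<cdot>\<^sub>v unit_vec n 0" using QPx[OF y] mult_mat_vec[OF Q w] Qw unfolding x_def by simp
      hence "x' = 0\<^sub>v m"
      proof -
        assume yc: "y = c \<cdot>\<^sub>v unit_vec n 0"
        show ?thesis
        proof (rule eq_vecI)
          fix j assume "j < dim_vec (0\<^sub>v m :: real vec)"
          hence j: "j < m" by simp
          have "y $ Suc j = 0" unfolding yc using j unfolding n_def by simp
          then show "x' $ j = 0\<^sub>v m $ j" using j unfolding y_def n_def by simp
        qed (insert x', simp)
      qed
      with x' show False by simp
    qed
  qed
qed
lemma expand2:
  fixes M :: "real mat"
  assumes M: "M \<in> carrier_mat r (Suc (Suc k))" and q: "q \<in> carrier_vec (Suc (Suc k))" and i: "i < r"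
  shows "(M *\<^sub>v q) $ i = M $$ (i,0) * q $ 0 + M $$ (i,1) * q $ 1
     + (\<Sum>j\<in>{0..<k}. M $$ (i, Suc (Suc j)) * q $ Suc (Suc j))"
proof -
  have "(M *\<^sub>v q) $ i = (\<Sum>j\<in>{0..<Suc (Suc k)}. M $$ (i, j) * q $ j)"
    using M q i by (simp add: scalar_prod_def row_def)
  also have "\<dots> = M $$ (i,0) * q $ 0 + (M $$ (i,1) * q $ 1
     + (\<Sum>j\<in>{0..<k}. M $$ (i, Suc (Suc j)) * q $ Suc (Suc j)))"
    by (simp add: sum.atLeast0_lessThan_Suc_shift del: sum.op_ivl_Suc)
  finally show ?thesis by simp
qed

lemma expand1:
  fixes M :: "real mat"
  assumes M: "M \<in> carrier_mat r (Suc k)" and q: "q \<in> carrier_vec (Suc k)" and i: "i < r"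
  shows "(M *\<^sub>v q) $ i = M $$ (i,0) * q $ 0
     + (\<Sum>j\<in>{0..<k}. M $$ (i, Suc j) * q $ Suc j)"
proof -
  have "(M *\<^sub>v q) $ i = (\<Sum>j\<in>{0..<Suc k}. M $$ (i, j) * q $ j)"
    using M q i by (simp add: scalar_prod_def row_def)
  also have "\<dots> = M $$ (i,0) * q $ 0 + (\<Sum>j\<in>{0..<k}. M $$ (i, Suc j) * q $ Suc j)"
    by (simp add: sum.atLeast0_lessThan_Suc_shift del: sum.op_ivl_Suc)
  finally show ?thesis by simp
qed

theorem lemma3p13:
  fixes n :: nat and a12 a21 lam :: real and x y u v :: "real vec" and R :: "real mat"
  assumes "n \<ge> 2"
    and "a12 \<noteq> 0"
    and "dim_vec x = n - 2" and "dim_vec y = n - 2"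
    and "R \<in> carrier_mat (n - 2) (n - 2)"
    and "simple_eigenvalue (blockA n a12 a21 x y R) lam"
    and "dim_vec u = n" and "\<forall>i<n. u $ i > 0"
    and "dim_vec v = n" and "\<forall>i<n. v $ i > 0"
    and "blockA n a12 a21 x y R *\<^sub>v u = lam \<cdot>\<^sub>v u"
    and "transpose_mat (blockA n a12 a21 x y R) *\<^sub>v v = lam \<cdot>\<^sub>v v"
  shows "simple_eigenvalue (blockB n lam a12 a21 x y R) lam
    \<and> blockB n lam a12 a21 x y R *\<^sub>v vec (n - 1) (\<lambda>i. if i = 0 then u $ 0 else u $ (i + 1))
        = lam \<cdot>\<^sub>v vec (n - 1) (\<lambda>i. if i = 0 then u $ 0 else u $ (i + 1))
    \<and> transpose_mat (blockB n lam a12 a21 x y R) *\<^sub>v vec (n - 1) (\<lambda>i. if i = 0 then v $ 1 else v $ (i + 1))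
        = lam \<cdot>\<^sub>v vec (n - 1) (\<lambda>i. if i = 0 then v $ 1 else v $ (i + 1))"
proof -
  define k where "k = n - 2"
  have nk: "n = Suc (Suc k)" using assms(1) unfolding k_def by simp
  have k1: "n - 1 = Suc k" and k2: "n - 2 = k" using nk by auto
  define A where "A = blockA n a12 a21 x y R"
  define B where "B = blockB n lam a12 a21 x y R"
  define b where "b = lam + a21 - lam^2 / a12"
  define w where "w = vec (n - 1) (\<lambda>i. if i = 0 then u $ 0 else u $ (i + 1))"
  define z where "z = vec (n - 1) (\<lambda>i. if i = 0 then v $ 1 else v $ (i + 1))"
  have a12: "a12 \<noteq> 0" by fact
  have xd: "dim_vec x = k" using assms(3) unfolding k2 .
  have yd: "dim_vec y = k" using assms(4) unfolding k2 .
  have R: "R \<in> carrier_mat k k" using assms(5) unfolding k2 .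
  have u: "u \<in> carrier_vec n" using assms(7) by (rule carrier_vecI)
  have v: "v \<in> carrier_vec n" using assms(9) by (rule carrier_vecI)
  have upos: "\<And>i. i < n \<Longrightarrow> u $ i > 0" using assms(8) by blast
  have vpos: "\<And>i. i < n \<Longrightarrow> v $ i > 0" using assms(10) by blast
  have A: "A \<in> carrier_mat n n" unfolding A_def blockA_def by simp
  have B: "B \<in> carrier_mat (Suc k) (Suc k)" unfolding B_def blockB_def k1 by simp
  have wc: "w \<in> carrier_vec (Suc k)" and zc: "z \<in> carrier_vec (Suc k)" unfolding w_def z_def k1 by auto
  have Aidx: "A $$ (i,j) = (if i = 0 then (if j = 1 then a12 else 0)
     else if i = 1 then (if j = 0 then a21 else if j = 1 then 0 else y $ (j - 2))
     else (if j = 0 then x $ (i - 2) else if j = 1 then 0 else R $$ (i - 2, j - 2)))" if "i < n" "j < n" for i j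
    using that unfolding A_def blockA_def by simp
  have Bidx: "B $$ (i,j) = (if i = 0 then (if j = 0 then b else y $ (j - 1))
     else (if j = 0 then x $ (i - 1) else R $$ (i - 1, j - 1)))" if "i < Suc k" "j < Suc k" for i j
    using that unfolding B_def blockB_def b_def k1 by simp
  have Av0: "(A *\<^sub>v q) $ 0 = a12 * q $ 1"
    and Av1: "(A *\<^sub>v q) $ 1 = a21 * q $ 0 + (\<Sum>j\<in>{0..<k}. y $ j * q $ Suc (Suc j))"
    and Av2: "\<And>i. i < k \<Longrightarrow> (A *\<^sub>v q) $ Suc (Suc i) = x $ i * q $ 0 + (\<Sum>j\<in>{0..<k}. R $$ (i,j) * q $ Suc (Suc j))"
    if q: "q \<in> carrier_vec n" for q
  proof -
    note e = expand2[OF A[unfolded nk] q[unfolded nk]]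
    show "(A *\<^sub>v q) $ 0 = a12 * q $ 1" using e[of 0] Aidx[of 0] unfolding nk by simp
    show "(A *\<^sub>v q) $ 1 = a21 * q $ 0 + (\<Sum>j\<in>{0..<k}. y $ j * q $ Suc (Suc j))"
      using e[of 1] Aidx[of 1] unfolding nk by simp
    show "(A *\<^sub>v q) $ Suc (Suc i) = x $ i * q $ 0 + (\<Sum>j\<in>{0..<k}. R $$ (i,j) * q $ Suc (Suc j))" if "i < k" for i
      using e[of "Suc (Suc i)"] Aidx[of "Suc (Suc i)"] that unfolding nk by simp
  qed
  have At: "transpose_mat A \<in> carrier_mat n n" using A by simp
  have ATv0: "(transpose_mat A *\<^sub>v q) $ 0 = a21 * q $ 1 + (\<Sum>j\<in>{0..<k}. x $ j * q $ Suc (Suc j))"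
    and ATv1: "(transpose_mat A *\<^sub>v q) $ 1 = a12 * q $ 0"
    and ATv2: "\<And>i. i < k \<Longrightarrow> (transpose_mat A *\<^sub>v q) $ Suc (Suc i) = y $ i * q $ 1 + (\<Sum>j\<in>{0..<k}. R $$ (j,i) * q $ Suc (Suc j))"
    if q: "q \<in> carrier_vec n" for q
  proof -
    note e = expand2[OF At[unfolded nk] q[unfolded nk]]
    show "(transpose_mat A *\<^sub>v q) $ 0 = a21 * q $ 1 + (\<Sum>j\<in>{0..<k}. x $ j * q $ Suc (Suc j))"
      using e[of 0] Aidx A unfolding nk by simp
    show "(transpose_mat A *\<^sub>v q) $ 1 = a12 * q $ 0"
      using e[of 1] Aidx A unfolding nk by simp
    show "(transpose_mat A *\<^sub>v q) $ Suc (Suc i) = y $ i * q $ 1 + (\<Sum>j\<in>{0..<k}. R $$ (j,i) * q $ Suc (Suc j))" if "i < k" for i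
      using e[of "Suc (Suc i)"] Aidx A that unfolding nk by simp
  qed
  have Bv0: "(B *\<^sub>v q) $ 0 = b * q $ 0 + (\<Sum>j\<in>{0..<k}. y $ j * q $ Suc j)"
    and Bv1: "\<And>i. i < k \<Longrightarrow> (B *\<^sub>v q) $ Suc i = x $ i * q $ 0 + (\<Sum>j\<in>{0..<k}. R $$ (i,j) * q $ Suc j)"
    if q: "q \<in> carrier_vec (Suc k)" for q
  proof -
    note e = expand1[OF B q]
    show "(B *\<^sub>v q) $ 0 = b * q $ 0 + (\<Sum>j\<in>{0..<k}. y $ j * q $ Suc j)" using e[of 0] Bidx by simp
    show "(B *\<^sub>v q) $ Suc i = x $ i * q $ 0 + (\<Sum>j\<in>{0..<k}. R $$ (i,j) * q $ Suc j)" if "i < k" for i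
      using e[of "Suc i"] Bidx that by simp
  qed
  have Bt: "transpose_mat B \<in> carrier_mat (Suc k) (Suc k)" using B by simp
  have BTv0: "(transpose_mat B *\<^sub>v q) $ 0 = b * q $ 0 + (\<Sum>j\<in>{0..<k}. x $ j * q $ Suc j)"
    and BTv1: "\<And>i. i < k \<Longrightarrow> (transpose_mat B *\<^sub>v q) $ Suc i = y $ i * q $ 0 + (\<Sum>j\<in>{0..<k}. R $$ (j,i) * q $ Suc j)"
    if q: "q \<in> carrier_vec (Suc k)" for q
  proof -
    note e = expand1[OF Bt q]
    show "(transpose_mat B *\<^sub>v q) $ 0 = b * q $ 0 + (\<Sum>j\<in>{0..<k}. x $ j * q $ Suc j)" using e[of 0] Bidx B by simp
    show "(transpose_mat B *\<^sub>v q) $ Suc i = y $ i * q $ 0 + (\<Sum>j\<in>{0..<k}. R $$ (j,i) * q $ Suc j)" if "i < k" for i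
      using e[of "Suc i"] Bidx B that by simp
  qed

  have Au: "A *\<^sub>v u = lam \<cdot>\<^sub>v u" and ATv: "transpose_mat A *\<^sub>v v = lam \<cdot>\<^sub>v v"
    using assms(11,12) unfolding A_def by auto
  have E0: "a12 * u $ 1 = lam * u $ 0"
  proof -
    have "(A *\<^sub>v u) $ 0 = lam * u $ 0" using Au u unfolding nk by simp
    then show ?thesis using Av0[OF u] by simp
  qed
  have E1: "a21 * u $ 0 + (\<Sum>j\<in>{0..<k}. y $ j * u $ Suc (Suc j)) = lam * u $ 1"
  proof -
    have "(A *\<^sub>v u) $ 1 = lam * u $ 1" using Au u unfolding nk by simp
    then show ?thesis using Av1[OF u] by simp
  qed
  have E2: "x $ i * u $ 0 + (\<Sum>j\<in>{0..<k}. R $$ (i,j) * u $ Suc (Suc j)) = lam * u $ Suc (Suc i)" if i: "i < k" for i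
  proof -
    have "(A *\<^sub>v u) $ Suc (Suc i) = lam * u $ Suc (Suc i)" using Au u i unfolding nk by simp
    then show ?thesis using Av2[OF u i] by simp
  qed
  have F0: "a21 * v $ 1 + (\<Sum>j\<in>{0..<k}. x $ j * v $ Suc (Suc j)) = lam * v $ 0"
  proof -
    have "(transpose_mat A *\<^sub>v v) $ 0 = lam * v $ 0" using ATv v unfolding nk by simp
    then show ?thesis using ATv0[OF v] by simp
  qed
  have F1: "a12 * v $ 0 = lam * v $ 1"
  proof -
    have "(transpose_mat A *\<^sub>v v) $ 1 = lam * v $ 1" using ATv v unfolding nk by simp
    then show ?thesis using ATv1[OF v] by simp
  qed
  have F2: "y $ i * v $ 1 + (\<Sum>j\<in>{0..<k}. R $$ (j,i) * v $ Suc (Suc j)) = lam * v $ Suc (Suc i)" if i: "i < k" for i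
  proof -
    have "(transpose_mat A *\<^sub>v v) $ Suc (Suc i) = lam * v $ Suc (Suc i)" using ATv v i unfolding nk by simp
    then show ?thesis using ATv2[OF v i] by simp
  qed
  have u0: "u $ 0 > 0" and u1: "u $ 1 > 0" and v1: "v $ 1 > 0" using upos vpos unfolding nk by auto
  have widx: "w $ 0 = u $ 0" "\<And>j. j < k \<Longrightarrow> w $ Suc j = u $ Suc (Suc j)" unfolding w_def k1 by auto
  have zidx: "z $ 0 = v $ 1" "\<And>j. j < k \<Longrightarrow> z $ Suc j = v $ Suc (Suc j)" unfolding z_def k1 by auto
  have Bw: "B *\<^sub>v w = lam \<cdot>\<^sub>v w"
  proof (rule eq_vecI)
    fix i assume "i < dim_vec (lam \<cdot>\<^sub>v w)"
    hence i: "i < Suc k" using wc by simp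
    show "(B *\<^sub>v w) $ i = (lam \<cdot>\<^sub>v w) $ i"
    proof (cases i)
      case 0
      have s: "(\<Sum>j\<in>{0..<k}. y $ j * w $ Suc j) = (\<Sum>j\<in>{0..<k}. y $ j * u $ Suc (Suc j))"
        by (rule sum.cong, auto simp: widx)
      have l1: "lam * u $ 0 / a12 = u $ 1" using E0 a12 by (simp add: field_simps)
      have "b * u $ 0 + (\<Sum>j\<in>{0..<k}. y $ j * u $ Suc (Suc j)) = lam * u $ 0"
      proof -
        have "b * u $ 0 = lam * u $ 0 + a21 * u $ 0 - lam * (lam * u $ 0 / a12)"
          unfolding b_def using a12 by (simp add: field_simps power2_eq_square)
        then show ?thesis using E1 l1 by simp
      qed
      then show ?thesis using 0 Bv0[OF wc] s wc widx by simp
    next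
      case (Suc j)
      hence j: "j < k" using i by simp
      have s: "(\<Sum>l\<in>{0..<k}. R $$ (j,l) * w $ Suc l) = (\<Sum>l\<in>{0..<k}. R $$ (j,l) * u $ Suc (Suc l))"
        by (rule sum.cong, auto simp: widx)
      show ?thesis using Suc Bv1[OF wc j] s E2[OF j] wc widx j by simp
    qed
  qed (insert B wc, auto)
  have BTz: "transpose_mat B *\<^sub>v z = lam \<cdot>\<^sub>v z"
  proof (rule eq_vecI)
    fix i assume "i < dim_vec (lam \<cdot>\<^sub>v z)"
    hence i: "i < Suc k" using zc by simp
    show "(transpose_mat B *\<^sub>v z) $ i = (lam \<cdot>\<^sub>v z) $ i"
    proof (cases i)
      case 0
      have s: "(\<Sum>j\<in>{0..<k}. x $ j * z $ Suc j) = (\<Sum>j\<in>{0..<k}. x $ j * v $ Suc (Suc j))"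
        by (rule sum.cong, auto simp: zidx)
      have l1: "lam * v $ 1 / a12 = v $ 0" using F1 a12 by (simp add: field_simps)
      have "b * v $ 1 + (\<Sum>j\<in>{0..<k}. x $ j * v $ Suc (Suc j)) = lam * v $ 1"
      proof -
        have "b * v $ 1 = lam * v $ 1 + a21 * v $ 1 - lam * (lam * v $ 1 / a12)"
          unfolding b_def using a12 by (simp add: field_simps power2_eq_square)
        moreover have "lam * (lam * v $ 1 / a12) = lam * v $ 0" using l1 by simp
        ultimately show ?thesis using F0 by linarith
      qed
      then show ?thesis using 0 BTv0[OF zc] s zc zidx by simp
    next
      case (Suc j)
      hence j: "j < k" using i by simp
      have s: "(\<Sum>l\<in>{0..<k}. R $$ (l,j) * z $ Suc l) = (\<Sum>l\<in>{0..<k}. R $$ (l,j) * v $ Suc (Suc l))"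
        by (rule sum.cong, auto simp: zidx)
      show ?thesis using Suc BTv1[OF zc j] s F2[OF j] zc zidx j by simp
    qed
  qed (insert B zc, auto)
  have zw: "z \<bullet> w > 0"
  proof -
    have "z \<bullet> w = (\<Sum>i\<in>{0..<Suc k}. z $ i * w $ i)" using wc by (simp add: scalar_prod_def)
    also have "\<dots> > 0"
    proof (rule sum_pos)
      fix i assume "i \<in> {0..<Suc k}"
      hence i: "i < Suc k" by simp
      have "z $ i > 0" using i zidx vpos unfolding nk by (cases i) auto
      moreover have "w $ i > 0" using i widx upos unfolding nk by (cases i) auto
      ultimately show "z $ i * w $ i > 0" by simp
    qed auto
    finally show ?thesis .
  qed
  have Asimp: "order lam (char_poly A) = 1" using assms(6) unfolding A_def simple_eigenvalue_def .
  have uniqA: "\<exists>c. q = c \<cdot>\<^sub>v u" if q: "q \<in> carrier_vec n" and Aq: "A *\<^sub>v q = lam \<cdot>\<^sub>v q" for q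
  proof -
    have "A *\<^sub>v q - lam \<cdot>\<^sub>v q = 0 \<cdot>\<^sub>v u" using Aq q u by (intro eq_vecI) auto
    then show ?thesis using deflate[OF A[unfolded nk] u[unfolded nk] _ Au] u0 Asimp q unfolding nk by auto
  qed
  have "order lam (char_poly B) = 1"
  proof (subst deflate[OF B wc _ Bw], use u0 widx in simp, intro ballI allI impI)
    fix q d assume q: "q \<in> carrier_vec (Suc k)" and eq: "B *\<^sub>v q - lam \<cdot>\<^sub>v q = d \<cdot>\<^sub>v w"
    have Bq: "B *\<^sub>v q \<in> carrier_vec (Suc k)" using B q by simp
    have "z \<bullet> (B *\<^sub>v q - lam \<cdot>\<^sub>v q) = z \<bullet> (B *\<^sub>v q) - lam * (z \<bullet> q)"
      using scalar_prod_minus_distrib[OF zc Bq, of "lam \<cdot>\<^sub>v q"] q zc by simp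
    also have "z \<bullet> (B *\<^sub>v q) = (transpose_mat B *\<^sub>v z) \<bullet> q"
      using transpose_vec_mult_scalar[OF B q zc] by simp
    also have "\<dots> = lam * (z \<bullet> q)" unfolding BTz using zc q by simp
    finally have "z \<bullet> (d \<cdot>\<^sub>v w) = 0" unfolding eq by simp
    hence "d * (z \<bullet> w) = 0" using zc wc by simp
    hence d0: "d = 0" using zw by simp
    have Bq': "B *\<^sub>v q = lam \<cdot>\<^sub>v q"
    proof (rule eq_vecI)
      fix i assume "i < dim_vec (lam \<cdot>\<^sub>v q)"
      hence i: "i < Suc k" using q by simp
      have "(B *\<^sub>v q - lam \<cdot>\<^sub>v q) $ i = (d \<cdot>\<^sub>v w) $ i" using eq by simp
      then show "(B *\<^sub>v q) $ i = (lam \<cdot>\<^sub>v q) $ i" using i q wc B d0 by simp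
    qed (insert B q, auto)
    define qt where "qt = vec n (\<lambda>i. if i = 0 then q $ 0 else if i = 1 then lam * q $ 0 / a12 else q $ (i - 1))"
    have qt: "qt \<in> carrier_vec n" unfolding qt_def by simp
    have qtidx: "qt $ 0 = q $ 0" "qt $ 1 = lam * q $ 0 / a12" "\<And>j. j < k \<Longrightarrow> qt $ Suc (Suc j) = q $ Suc j"
      unfolding qt_def nk by auto
    have B0: "b * q $ 0 + (\<Sum>j\<in>{0..<k}. y $ j * q $ Suc j) = lam * q $ 0"
      using Bv0[OF q] Bq' q by simp
    have Bs: "x $ i * q $ 0 + (\<Sum>j\<in>{0..<k}. R $$ (i,j) * q $ Suc j) = lam * q $ Suc i" if "i < k" for i
    proof -
      have "(B *\<^sub>v q) $ Suc i = lam * q $ Suc i" using Bq' q that by simp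
      then show ?thesis using Bv1[OF q that] by simp
    qed
    have Aqt: "A *\<^sub>v qt = lam \<cdot>\<^sub>v qt"
    proof (rule eq_vecI)
      fix i assume "i < dim_vec (lam \<cdot>\<^sub>v qt)"
      hence i: "i < n" using qt by simp
      show "(A *\<^sub>v qt) $ i = (lam \<cdot>\<^sub>v qt) $ i"
      proof (cases "i = 0")
        case True
        then show ?thesis using Av0[OF qt] qtidx qt a12 i by simp
      next
        case False
        show ?thesis
        proof (cases "i = 1")
          case True
          have s: "(\<Sum>j\<in>{0..<k}. y $ j * qt $ Suc (Suc j)) = (\<Sum>j\<in>{0..<k}. y $ j * q $ Suc j)"
            by (rule sum.cong, auto simp: qtidx)
          have "a21 * q $ 0 + (\<Sum>j\<in>{0..<k}. y $ j * q $ Suc j) = lam * (lam * q $ 0 / a12)"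
          proof -
            have "b * q $ 0 = lam * q $ 0 + a21 * q $ 0 - lam * (lam * q $ 0 / a12)"
              unfolding b_def using a12 by (simp add: field_simps power2_eq_square)
            then show ?thesis using B0 by simp
          qed
          then show ?thesis using True Av1[OF qt] s qtidx qt i by simp
        next
          case False
          then obtain j where ij: "i = Suc (Suc j)" using \<open>i \<noteq> 0\<close> by (metis One_nat_def not0_implies_Suc)
          hence j: "j < k" using i nk by simp
          have s: "(\<Sum>l\<in>{0..<k}. R $$ (j,l) * qt $ Suc (Suc l)) = (\<Sum>l\<in>{0..<k}. R $$ (j,l) * q $ Suc l)"
            by (rule sum.cong, auto simp: qtidx)
          show ?thesis using ij Av2[OF qt j] s qtidx(1) qtidx(3)[OF j] Bs[OF j] qt i by simp
        qed
      qed
    qed (insert A qt, auto)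
    obtain c where c: "qt = c \<cdot>\<^sub>v u" using uniqA[OF qt Aqt] by blast
    have "q = c \<cdot>\<^sub>v w"
    proof (rule eq_vecI)
      fix i assume "i < dim_vec (c \<cdot>\<^sub>v w)"
      hence i: "i < Suc k" using wc by simp
      show "q $ i = (c \<cdot>\<^sub>v w) $ i"
      proof (cases i)
        case 0
        have "qt $ 0 = c * u $ 0" using c u unfolding nk by simp
        then show ?thesis using 0 qtidx widx wc by simp
      next
        case (Suc j)
        hence j: "j < k" using i by simp
        have "qt $ Suc (Suc j) = c * u $ Suc (Suc j)" using c u j unfolding nk by simp
        then show ?thesis using Suc qtidx(3)[OF j] widx(2)[OF j] wc i by simp
      qed
    qed (insert q wc, auto)
    then show "\<exists>c. q = c \<cdot>\<^sub>v w" by blast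
  qed
  then show ?thesis using Bw BTz unfolding simple_eigenvalue_def B_def w_def z_def by simp
qed
end
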